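(* Let $v_1,v_2$ be two (smooth) solutions of $( * )$ on $X$ such that, for some $C>0$ and $\epsilon\in(0,1)$, $0\le v_2-v_1\le C(y^{\epsilon}+y^{1-\epsilon})$ on all of $X$. Then $v_1=v_2$.
   Context: $X=\mathbb{R}^2\times(0,+\infty)$ with coordinates $(x_1,x_2,y)$, $z=x_1+ix_2$, $\Delta=\partial_1^2+\partial_2^2+\partial_y^2$; $P(z)$ is a non-zero complex polynomial; $( * )$ is the equation $\Delta u+e^{-2u}|P(z)|^2=0$ on $X$. *)

theory Defs
  imports "HOL-Analysis.Analysis" "HOL-Computational_Algebra.Polynomial"
begin

text \<open>Points of R^3 are vectors p :: real^3 with p$1 = x1, p$2 = x2, p$3 = y.\<close>

definition halfspaceX :: "(real^3) set" where
  "halfspaceX = {p. p $ 3 > 0}"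

fun iter_pd :: "'a::euclidean_space list \<Rightarrow> ('a \<Rightarrow> real) \<Rightarrow> 'a \<Rightarrow> real" where
  "iter_pd [] f = f"
| "iter_pd (v # vs) f = (\<lambda>x. frechet_derivative (iter_pd vs f) (at x) v)"

definition smooth_on :: "'a::euclidean_space set \<Rightarrow> ('a \<Rightarrow> real) \<Rightarrow> bool" where
  "smooth_on S f \<longleftrightarrow> (\<forall>vs. set vs \<subseteq> Basis \<longrightarrow> iter_pd vs f differentiable_on S)"

definition laplacian3 :: "(real^3 \<Rightarrow> real) \<Rightarrow> real^3 \<Rightarrow> real" where
  "laplacian3 u p = (\<Sum>i\<in>UNIV. iter_pd [axis i 1, axis i 1] u p)"

definition zcoord :: "real^3 \<Rightarrow> complex" where
  "zcoord p = Complex (p $ 1) (p $ 2)"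

definition solves_eq :: "complex poly \<Rightarrow> (real^3 \<Rightarrow> real) \<Rightarrow> bool" where
  "solves_eq P u \<longleftrightarrow> smooth_on halfspaceX u \<and>
     (\<forall>p\<in>halfspaceX. laplacian3 u p + exp (-2 * u p) * (cmod (poly P (zcoord p)))\<^sup>2 = 0)"

end

theory Submission imports Defs begin
lemma second_deriv_max:
  fixes f f' :: "real \<Rightarrow> real"
  assumes r: "r > 0"
    and d1: "\<And>t. \<bar>t\<bar> < r \<Longrightarrow> (f has_real_derivative f' t) (at t)"
    and d2: "(f' has_real_derivative E) (at 0)"
    and mx: "\<And>t. \<bar>t\<bar> < r \<Longrightarrow> f t \<le> f 0"
  shows "E \<le> 0"
proof (rule ccontr)
  assume "\<not> E \<le> 0" hence E: "E > 0" by simp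
  have "f' 0 = 0"
    by (rule DERIV_local_max[OF d1[of 0] r]) (use r mx in auto)
  obtain d where d: "d > 0" "\<And>h. h > 0 \<Longrightarrow> h < d \<Longrightarrow> f' 0 < f' (0 + h)"
    using DERIV_pos_inc_right[OF d2 E] by blast
  define t where "t = min d r / 2"
  have t: "0 < t" "t < d" "t < r" using d r by (auto simp: t_def)
  have cont: "continuous_on {0..t} f"
    by (rule DERIV_atLeastAtMost_imp_continuous_on) (use d1 t in force)
  have "f 0 < f t"
  proof (rule DERIV_pos_imp_increasing_open[OF t(1) _ cont])
    fix x assume x: "0 < x" "x < t"
    show "\<exists>y. DERIV f x :> y \<and> y > 0"
      using d1[of x] d(2)[of x] x t \<open>f' 0 = 0\<close> by auto
  qed
  with mx[of t] t show False by auto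
qed

lemma line_deriv:
  fixes v :: "'a::real_normed_vector \<Rightarrow> real"
  assumes "(v has_derivative D) (at (q + t *\<^sub>R e))"
  shows "((\<lambda>s. v (q + s *\<^sub>R e)) has_real_derivative D e) (at t)"
proof -
  have l: "((\<lambda>s. q + s *\<^sub>R e) has_derivative (\<lambda>h. h *\<^sub>R e)) (at t)"
    by (auto intro!: derivative_eq_intros)
  have "((v \<circ> (\<lambda>s. q + s *\<^sub>R e)) has_derivative (D \<circ> (\<lambda>h. h *\<^sub>R e))) (at t)"
    by (rule diff_chain_at[OF l]) (use assms in simp)
  moreover have "D \<circ> (\<lambda>h. h *\<^sub>R e) = (*) (D e)"
    using has_derivative_bounded_linear[OF assms]
    by (auto simp: fun_eq_iff linear_simps bounded_linear.linear)
  ultimately show ?thesis by (simp add: has_field_derivative_def o_def)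
qed

lemma open_X: "open halfspaceX"
  unfolding halfspaceX_def by (intro open_Collect_less continuous_intros)

lemma smooth_D0:
  assumes "smooth_on halfspaceX v" "x \<in> halfspaceX"
  shows "(v has_derivative frechet_derivative v (at x)) (at x)"
proof -
  have "iter_pd [] v differentiable_on halfspaceX"
    using assms(1) unfolding smooth_on_def by (metis empty_set empty_subsetI)
  hence "v differentiable (at x)"
    using assms(2) open_X by (simp add: differentiable_on_eq_differentiable_at)
  thus ?thesis by (simp add: frechet_derivative_works)
qed

lemma smooth_D1:
  assumes "smooth_on halfspaceX v" "x \<in> halfspaceX" "e \<in> Basis"
  shows "((\<lambda>y. frechet_derivative v (at y) e) has_derivative frechet_derivative (iter_pd [e] v) (at x)) (at x)"
proof -
  have "iter_pd [e] v differentiable_on halfspaceX"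
    using assms(1,3) unfolding smooth_on_def by (metis empty_set empty_subsetI insert_subset list.simps(15))
  hence "iter_pd [e] v differentiable (at x)"
    using assms(2) open_X by (simp add: differentiable_on_eq_differentiable_at)
  thus ?thesis by (simp add: frechet_derivative_works[symmetric])
qed

lemma dir_bound:
  assumes s1: "smooth_on halfspaceX v1" and s2: "smooth_on halfspaceX v2"
    and q: "q \<in> halfspaceX" and r: "r > 0"
    and line: "\<And>t. \<bar>t\<bar> < r \<Longrightarrow> q + t *\<^sub>R axis i 1 \<in> halfspaceX"
    and G1: "\<And>t. (G has_real_derivative G' t) (at t)"
    and G2: "(G' has_real_derivative c) (at 0)"
    and mx: "\<And>t. \<bar>t\<bar> < r \<Longrightarrow> v2 (q + t *\<^sub>R axis i 1) - v1 (q + t *\<^sub>R axis i 1) - G t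
                    \<le> v2 q - v1 q - G 0"
  shows "iter_pd [axis i 1, axis i 1] v2 q - iter_pd [axis i 1, axis i 1] v1 q \<le> c"
proof -
  define e :: "real^3" where "e = axis i 1"
  have eB: "e \<in> Basis" unfolding e_def by simp
  define f where "f t = v2 (q + t *\<^sub>R e) - v1 (q + t *\<^sub>R e) - G t" for t
  define f' where "f' t = frechet_derivative v2 (at (q + t *\<^sub>R e)) e
      - frechet_derivative v1 (at (q + t *\<^sub>R e)) e - G' t" for t
  have "E \<le> 0" if "(f' has_real_derivative E) (at 0)" for E
  proof (rule second_deriv_max[OF r _ that])
    fix t :: real assume t: "\<bar>t\<bar> < r"
    show "(f has_real_derivative f' t) (at t)"
      unfolding f_def f'_def
      by (intro derivative_intros line_deriv smooth_D0 s1 s2 G1) (use line t e_def in auto)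
  next
    fix t :: real assume t: "\<bar>t\<bar> < r"
    show "f t \<le> f 0" using mx[OF t] by (simp add: f_def e_def)
  qed
  moreover have "(f' has_real_derivative
      (frechet_derivative (iter_pd [e] v2) (at q) e - frechet_derivative (iter_pd [e] v1) (at q) e - c)) (at 0)"
    unfolding f'_def
    by (intro derivative_intros line_deriv G2) (use smooth_D1[OF s1 q eB] smooth_D1[OF s2 q eB] in auto)
  ultimately have "frechet_derivative (iter_pd [e] v2) (at q) e - frechet_derivative (iter_pd [e] v1) (at q) e - c \<le> 0" by blast
  thus ?thesis unfolding e_def by simp
qed
lemma B_small:
  fixes C \<epsilon> a y0 :: real
  assumes "0 < \<epsilon>" "\<epsilon> < 1" "a > 0" "y0 > 0"
  shows "\<exists>s>0. s < y0 \<and> C * (s powr \<epsilon> + s powr (1 - \<epsilon>)) < a"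
proof -
  have t: "((\<lambda>s. s powr b) \<longlongrightarrow> 0) (at_right 0)" if "b > 0" for b :: real
    by (rule tendsto_zero_powrI[where b=b]) (use that in \<open>auto simp: eventually_at_filter intro: tendsto_ident_at\<close>)
  have "((\<lambda>s. C * (s powr \<epsilon> + s powr (1 - \<epsilon>))) \<longlongrightarrow> C * (0 + 0)) (at_right 0)"
    by (intro tendsto_intros t) (use assms in auto)
  hence "\<forall>\<^sub>F s in at_right 0. C * (s powr \<epsilon> + s powr (1 - \<epsilon>)) < a"
    using assms(3) by (intro order_tendstoD(2)) auto
  then obtain b where b: "b > 0" "\<And>s. 0 < s \<Longrightarrow> s < b \<Longrightarrow> C * (s powr \<epsilon> + s powr (1 - \<epsilon>)) < a"
    unfolding eventually_at_right[OF zero_less_one] by auto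
  show ?thesis
    by (rule exI[of _ "min b y0 / 2"]) (use b assms in auto)
qed

lemma B_large:
  fixes C \<epsilon> \<delta> y0 :: real
  assumes "0 < \<epsilon>" "\<epsilon> < 1" "\<delta> > 0" "C > 0"
  shows "\<exists>R\<ge>y0. R \<ge> 1 \<and> C * (R powr \<epsilon> + R powr (1 - \<epsilon>)) \<le> \<delta> * R"
proof -
  define \<nu> where "\<nu> = max \<epsilon> (1 - \<epsilon>)"
  have \<nu>: "\<nu> < 1" "\<epsilon> \<le> \<nu>" "1 - \<epsilon> \<le> \<nu>" using assms by (auto simp: \<nu>_def)
  have "((\<lambda>y::real. y powr (\<nu> - 1)) \<longlongrightarrow> 0) at_top"
    by (rule tendsto_neg_powr) (use \<nu> in \<open>auto intro: filterlim_ident\<close>)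
  hence "\<forall>\<^sub>F y in at_top. y powr (\<nu> - 1) < \<delta> / (2 * C)"
    using assms by (intro order_tendstoD(2)) auto
  then obtain N where N: "\<And>y. y \<ge> N \<Longrightarrow> y powr (\<nu> - 1) < \<delta> / (2 * C)"
    unfolding eventually_at_top_linorder by auto
  define R where "R = max N (max 1 y0)"
  have R: "R \<ge> N" "R \<ge> 1" "R \<ge> y0" by (auto simp: R_def)
  have "R powr \<epsilon> \<le> R powr \<nu>" "R powr (1 - \<epsilon>) \<le> R powr \<nu>"
    using powr_mono R \<nu> by auto
  hence "C * R powr \<epsilon> \<le> C * R powr \<nu>" "C * R powr (1 - \<epsilon>) \<le> C * R powr \<nu>"
    using assms by (auto intro: mult_left_mono)
  hence "C * (R powr \<epsilon> + R powr (1 - \<epsilon>)) \<le> 2 * C * R powr \<nu>"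
    by (simp add: algebra_simps)
  also have "R powr \<nu> = R powr (\<nu> - 1) * R"
    using R powr_add[of R "\<nu> - 1" 1] by simp
  also have "2 * C * (R powr (\<nu> - 1) * R) \<le> 2 * C * (\<delta> / (2 * C) * R)"
    using N[OF R(1)] R assms by (intro mult_left_mono mult_right_mono) auto
  also have "\<dots> = \<delta> * R" using assms by simp
  finally show ?thesis using R by auto
qed
lemma all3: "(\<forall>i::3. P i) \<longleftrightarrow> P 1 \<and> P 2 \<and> P 3"
  by (metis exhaust_3)

theorem mainTheorem7:
  fixes P :: "complex poly" and v1 v2 :: "real^3 \<Rightarrow> real" and C \<epsilon> :: real
  assumes "P \<noteq> 0"
    and "solves_eq P v1" and "solves_eq P v2"
    and "C > 0" and "0 < \<epsilon>" and "\<epsilon> < 1"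
    and "\<forall>p\<in>halfspaceX. 0 \<le> v2 p - v1 p \<and>
           v2 p - v1 p \<le> C * (p $ 3 powr \<epsilon> + p $ 3 powr (1 - \<epsilon>))"
  shows "\<forall>p\<in>halfspaceX. v1 p = v2 p"
proof (intro ballI, rule ccontr)
  fix p0 assume p0X: "p0 \<in> halfspaceX" and ne: "v1 p0 \<noteq> v2 p0"
  have s1: "smooth_on halfspaceX v1" and s2: "smooth_on halfspaceX v2"
    and pde1: "\<And>p. p \<in> halfspaceX \<Longrightarrow> laplacian3 v1 p + exp (-2 * v1 p) * (cmod (poly P (zcoord p)))\<^sup>2 = 0"
    and pde2: "\<And>p. p \<in> halfspaceX \<Longrightarrow> laplacian3 v2 p + exp (-2 * v2 p) * (cmod (poly P (zcoord p)))\<^sup>2 = 0"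
    using assms(2,3) unfolding solves_eq_def by auto
  define w where "w p = v2 p - v1 p" for p
  define B where "B y = C * (y powr \<epsilon> + y powr (1 - \<epsilon>))" for y
  have wb: "\<And>p. p \<in> halfspaceX \<Longrightarrow> 0 \<le> w p \<and> w p \<le> B (p $ 3)"
    using assms(7) unfolding w_def B_def by auto
  have Bmono: "B y \<le> B y'" if "0 \<le> y" "y \<le> y'" for y y'
  proof -
    have "y powr \<epsilon> \<le> y' powr \<epsilon>" "y powr (1-\<epsilon>) \<le> y' powr (1-\<epsilon>)"
      using that assms(5,6) by (auto intro: powr_mono2)
    thus ?thesis unfolding B_def using assms(4) by (intro mult_left_mono) auto
  qed
  define m where "m = w p0"
  have m: "m > 0" using wb[OF p0X] ne unfolding m_def w_def by auto
  define y0 where "y0 = p0 $ 3"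
  have y0: "y0 > 0" using p0X unfolding halfspaceX_def y0_def by auto
  define \<delta> where "\<delta> = m / (4 * y0)"
  have \<delta>: "\<delta> > 0" using m y0 by (simp add: \<delta>_def)
  obtain R where R: "R \<ge> y0" "R \<ge> 1" "B R \<le> \<delta> * R"
    using B_large[OF assms(5,6) \<delta> assms(4), of y0] unfolding B_def by auto
  define \<eta> where "\<eta> = m / (12 * R^2)"
  have \<eta>: "\<eta> > 0" using m R by (simp add: \<eta>_def)
  define L where "L = B R / \<eta> + 1"
  have BR0: "B R \<ge> 0" using wb[OF p0X] Bmono[of y0 R] R y0 unfolding y0_def by auto
  have L: "L \<ge> 1" "\<eta> * L^2 \<ge> B R"
  proof -
    show "L \<ge> 1" using BR0 \<eta> by (simp add: L_def)
    hence "L^2 \<ge> L" by (simp add: power2_eq_square)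
    moreover have "\<eta> * L \<ge> B R" using \<eta> by (simp add: L_def field_simps)
    ultimately show "\<eta> * L^2 \<ge> B R" using \<eta> by (smt (verit) mult_left_mono)
  qed
  obtain s where s: "s > 0" "s < y0" "B s < m / 2"
    using B_small[OF assms(5,6), of "m/2" y0 C] m y0 unfolding B_def by auto
  define a1 where "a1 = p0 $ 1"
  define a2 where "a2 = p0 $ 2"
  define g where "g p = \<delta> * p$3 + \<eta> * ((p$1 - a1)^2 + (p$2 - a2)^2) + 3 * \<eta> * (R^2 - (p$3)^2)" for p :: "real^3"
  define \<phi> where "\<phi> p = w p - g p" for p
  define lo :: "real^3" where "lo = vector [a1 - L, a2 - L, s]"
  define hi :: "real^3" where "hi = vector [a1 + L, a2 + L, R]"
  define K where "K = cbox lo hi"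
  have memK: "p \<in> K \<longleftrightarrow> a1 - L \<le> p$1 \<and> p$1 \<le> a1 + L \<and> a2 - L \<le> p$2 \<and> p$2 \<le> a2 + L
       \<and> s \<le> p$3 \<and> p$3 \<le> R" for p
    unfolding K_def mem_box_cart all3 lo_def hi_def by simp
  have KX: "K \<subseteq> halfspaceX" using s by (auto simp: memK halfspaceX_def)
  have contw: "continuous_on halfspaceX w"
  proof -
    have "iter_pd [] v1 differentiable_on halfspaceX" "iter_pd [] v2 differentiable_on halfspaceX"
      using s1 s2 unfolding smooth_on_def by (metis empty_set empty_subsetI)+
    hence "continuous_on halfspaceX v1" "continuous_on halfspaceX v2"
      by (auto intro: differentiable_imp_continuous_on)
    thus ?thesis unfolding w_def by (intro continuous_intros)
  qed
  have contphi: "continuous_on K \<phi>"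
    unfolding \<phi>_def g_def by (intro continuous_intros continuous_on_subset[OF contw KX])
  have p0K: "p0 \<in> K" using s R L \<eta> BR0 by (auto simp: memK a1_def a2_def y0_def)
  obtain q where qK: "q \<in> K" and qmax: "\<And>p. p \<in> K \<Longrightarrow> \<phi> p \<le> \<phi> q"
    using continuous_attains_sup[OF compact_cbox[of lo hi] _ contphi[unfolded K_def]] p0K
    unfolding K_def by blast
  have "g p0 \<le> m / 2"
  proof -
    have "g p0 = \<delta> * y0 + 3 * \<eta> * (R^2 - y0^2)" by (simp add: g_def a1_def a2_def y0_def)
    also have "\<delta> * y0 = m / 4" using y0 by (simp add: \<delta>_def)
    also have "3 * \<eta> * (R^2 - y0^2) \<le> 3 * \<eta> * R^2" using \<eta> by simp
    also have "3 * \<eta> * R^2 = m / 4" using R by (simp add: \<eta>_def)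
    finally show ?thesis by simp
  qed
  hence phiq: "\<phi> q \<ge> m / 2" using qmax[OF p0K] unfolding \<phi>_def m_def by simp
  have qX: "q \<in> halfspaceX" using qK KX by auto
  have q: "a1 - L \<le> q$1" "q$1 \<le> a1 + L" "a2 - L \<le> q$2" "q$2 \<le> a2 + L" "s \<le> q$3" "q$3 \<le> R"
    using qK by (auto simp: memK)
  have wq: "0 \<le> w q" "w q \<le> B R" using wb[OF qX] Bmono[of "q$3" R] q s by auto
  have gparts: "0 \<le> \<delta> * q$3" "0 \<le> \<eta> * (q$1 - a1)^2" "0 \<le> \<eta> * (q$2 - a2)^2" "0 \<le> 3 * \<eta> * (R^2 - (q$3)^2)"
    using \<delta> \<eta> q s by (auto intro!: mult_nonneg_nonneg simp: power_mono)
  have q3R: "q$3 < R"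
  proof (rule ccontr)
    assume "\<not> q$3 < R" hence "q$3 = R" using q by auto
    hence "g q \<ge> \<delta> * R" using gparts unfolding g_def by (simp add: algebra_simps)
    thus False using phiq wq R m unfolding \<phi>_def by linarith
  qed
  have q3s: "s < q$3"
  proof (rule ccontr)
    assume "\<not> s < q$3" hence "q$3 = s" using q by auto
    hence "w q \<le> B s" using wb[OF qX] by simp
    moreover have "g q \<ge> 0" using gparts unfolding g_def by (simp add: distrib_left)
    ultimately show False using phiq s unfolding \<phi>_def by linarith
  qed
  have q1: "\<bar>q$1 - a1\<bar> < L"
  proof (rule ccontr)
    assume "\<not> \<bar>q$1 - a1\<bar> < L" hence "\<bar>q$1 - a1\<bar> = L" using q by auto
    hence "(q$1 - a1)^2 = L^2" by (metis power2_abs)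
    hence "g q \<ge> \<eta> * L^2" using gparts unfolding g_def by (simp add: algebra_simps)
    thus False using phiq wq L m unfolding \<phi>_def by linarith
  qed
  have q2: "\<bar>q$2 - a2\<bar> < L"
  proof (rule ccontr)
    assume "\<not> \<bar>q$2 - a2\<bar> < L" hence "\<bar>q$2 - a2\<bar> = L" using q by auto
    hence "(q$2 - a2)^2 = L^2" by (metis power2_abs)
    hence "g q \<ge> \<eta> * L^2" using gparts unfolding g_def by (simp add: algebra_simps)
    thus False using phiq wq L m unfolding \<phi>_def by linarith
  qed
  define r where "r = min (min (L - \<bar>q$1 - a1\<bar>) (L - \<bar>q$2 - a2\<bar>)) (min (q$3 - s) (R - q$3))"
  have r: "r > 0" using q1 q2 q3R q3s by (simp add: r_def)
  have lineK: "q + t *\<^sub>R axis i 1 \<in> K" if "\<bar>t\<bar> < r" for t i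
  proof -
    have jj: "\<bar>(q + t *\<^sub>R axis i 1) $ j - q $ j\<bar> < r" for j
      using that r by (auto simp: axis_def)
    have j: "q$j - r < (q + t *\<^sub>R axis i 1) $ j" "(q + t *\<^sub>R axis i 1) $ j < q$j + r" for j
      using jj[of j] by (simp_all add: abs_less_iff)
    have rb: "r \<le> L - \<bar>q$1-a1\<bar>" "r \<le> L - \<bar>q$2-a2\<bar>" "r \<le> q$3 - s" "r \<le> R - q$3"
      by (simp_all add: r_def)
    have "q$1 - a1 \<le> \<bar>q$1-a1\<bar>" "a1 - q$1 \<le> \<bar>q$1-a1\<bar>" "q$2 - a2 \<le> \<bar>q$2-a2\<bar>" "a2 - q$2 \<le> \<bar>q$2-a2\<bar>"
      by auto
    with j[of 1] j[of 2] j[of 3] rb show ?thesis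
      unfolding memK by linarith
  qed
  have lineX: "q + t *\<^sub>R axis i 1 \<in> halfspaceX" if "\<bar>t\<bar> < r" for t i
    using lineK[OF that] KX by auto
  have mx: "\<phi> (q + t *\<^sub>R axis i 1) \<le> \<phi> q" if "\<bar>t\<bar> < r" for t i
    using qmax[OF lineK[OF that]] .
  have d1: "iter_pd [axis 1 1, axis 1 1] v2 q - iter_pd [axis 1 1, axis 1 1] v1 q \<le> 2 * \<eta>"
  proof (rule dir_bound[OF s1 s2 qX r lineX, where G="\<lambda>t. \<eta> * (q$1 + t - a1)^2" and G'="\<lambda>t. 2 * \<eta> * (q$1 + t - a1)"])
    show "((\<lambda>t. \<eta> * (q$1 + t - a1)^2) has_real_derivative 2 * \<eta> * (q$1 + t - a1)) (at t)" for t
      by (auto intro!: derivative_eq_intros)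
    show "((\<lambda>t. 2 * \<eta> * (q$1 + t - a1)) has_real_derivative 2 * \<eta>) (at 0)"
      by (auto intro!: derivative_eq_intros)
    fix t :: real assume t: "\<bar>t\<bar> < r"
    show "v2 (q + t *\<^sub>R axis 1 1) - v1 (q + t *\<^sub>R axis 1 1) - \<eta> * (q$1 + t - a1)^2
          \<le> v2 q - v1 q - \<eta> * (q$1 + 0 - a1)^2"
      using mx[OF t, of 1] by (simp add: \<phi>_def g_def w_def axis_def algebra_simps)
  qed
  have d2: "iter_pd [axis 2 1, axis 2 1] v2 q - iter_pd [axis 2 1, axis 2 1] v1 q \<le> 2 * \<eta>"
  proof (rule dir_bound[OF s1 s2 qX r lineX, where G="\<lambda>t. \<eta> * (q$2 + t - a2)^2" and G'="\<lambda>t. 2 * \<eta> * (q$2 + t - a2)"])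
    show "((\<lambda>t. \<eta> * (q$2 + t - a2)^2) has_real_derivative 2 * \<eta> * (q$2 + t - a2)) (at t)" for t
      by (auto intro!: derivative_eq_intros)
    show "((\<lambda>t. 2 * \<eta> * (q$2 + t - a2)) has_real_derivative 2 * \<eta>) (at 0)"
      by (auto intro!: derivative_eq_intros)
    fix t :: real assume t: "\<bar>t\<bar> < r"
    show "v2 (q + t *\<^sub>R axis 2 1) - v1 (q + t *\<^sub>R axis 2 1) - \<eta> * (q$2 + t - a2)^2
          \<le> v2 q - v1 q - \<eta> * (q$2 + 0 - a2)^2"
      using mx[OF t, of 2] by (simp add: \<phi>_def g_def w_def axis_def algebra_simps)
  qed
  have d3: "iter_pd [axis 3 1, axis 3 1] v2 q - iter_pd [axis 3 1, axis 3 1] v1 q \<le> - 6 * \<eta>"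
  proof (rule dir_bound[OF s1 s2 qX r lineX, where G="\<lambda>t. \<delta> * (q$3 + t) - 3 * \<eta> * (q$3 + t)^2" and G'="\<lambda>t. \<delta> - 6 * \<eta> * (q$3 + t)"])
    show "((\<lambda>t. \<delta> * (q$3 + t) - 3 * \<eta> * (q$3 + t)^2) has_real_derivative \<delta> - 6 * \<eta> * (q$3 + t)) (at t)" for t
      by (auto intro!: derivative_eq_intros)
    show "((\<lambda>t. \<delta> - 6 * \<eta> * (q$3 + t)) has_real_derivative - 6 * \<eta>) (at 0)"
      by (auto intro!: derivative_eq_intros)
    fix t :: real assume t: "\<bar>t\<bar> < r"
    show "v2 (q + t *\<^sub>R axis 3 1) - v1 (q + t *\<^sub>R axis 3 1) - (\<delta> * (q$3 + t) - 3 * \<eta> * (q$3 + t)^2)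
          \<le> v2 q - v1 q - (\<delta> * (q$3 + 0) - 3 * \<eta> * (q$3 + 0)^2)"
      using mx[OF t, of 3] by (simp add: \<phi>_def g_def w_def axis_def algebra_simps)
  qed
  have "laplacian3 v2 q - laplacian3 v1 q \<le> - 2 * \<eta>"
    using d1 d2 d3 unfolding laplacian3_def sum_3 by linarith
  moreover have "laplacian3 v2 q - laplacian3 v1 q \<ge> 0"
  proof -
    have "exp (-2 * v2 q) \<le> exp (-2 * v1 q)" using wq unfolding w_def by simp
    hence "exp (-2 * v2 q) * (cmod (poly P (zcoord q)))\<^sup>2 \<le> exp (-2 * v1 q) * (cmod (poly P (zcoord q)))\<^sup>2"
      by (intro mult_right_mono) auto
    thus ?thesis using pde1[OF qX] pde2[OF qX] by linarith
  qed
  ultimately show False using \<eta> by linarith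
qed

end
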